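(* Let $\mathcal{A}\in\mathbb{R}^{d\times\cdots\times d}$ be an order-$k$ real tensor with the same dimension $d$ in all modes. For every level $1\le\ell\le k$ and every partition $\pi=\{B_1,\dots,B_\ell\}\in\mathcal{P}^\ell_{[k]}$, \[ d^{-(k-\max_{i\in[\ell]}|B_i|)/2}\|\mathcal{A}\|_F\le\|\mathrm{Unfold}_\pi(\mathcal{A})\|_\sigma\le\|\mathcal{A}\|_F . \]
   Context: $\|\mathcal{A}\|_F$ is the Frobenius norm. For a real tensor $\mathcal{T}\in\mathbb{R}^{e_1\times\cdots\times e_m}$, $\|\mathcal{T}\|_\sigma=\sup\{\sum t_{i_1\dots i_m}x^{(1)}_{i_1}\cdots x^{(m)}_{i_m}:\ \mathbf{x}_n\in\mathbb{R}^{e_n},\ \|\mathbf{x}_n\|_2=1\}$. $\mathcal{P}^\ell_{[k]}$ is the set of partitions of $[k]$ into exactly $\ell$ nonempty blocks. Unfolding: for $\pi=\{B_1,\dots,B_\ell\}$, $\mathrm{Unfold}_\pi(\mathcal{A})$ is the order-$\ell$ tensor of dimensions $(d^{|B_1|},\dots,d^{|B_\ell|})$ whose entry at $(m_1,\dots,m_\ell)$ is $a_{i_1\dots i_k}$, where $m_j$ corresponds to $(i_r)_{r\in B_j}$ under a fixed bijection $[d]^{B_j}\to[d^{|B_j|}]$. *)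

theory Defs
  imports "HOL-Analysis.Analysis" "HOL-Library.Disjoint_Sets"
begin

text \<open>An order-k tensor with all dimensions d is a function on multi-indices
  i :: nat \<Rightarrow> nat, where the relevant multi-indices are
  PiE {0..<k} (\<lambda>_. {0..<d}) (modes are 0..k-1, coordinates 0..d-1).\<close>

definition frobenius_norm :: "nat \<Rightarrow> nat \<Rightarrow> ((nat \<Rightarrow> nat) \<Rightarrow> real) \<Rightarrow> real" where
  "frobenius_norm k d A = sqrt (\<Sum>i\<in>PiE {0..<k} (\<lambda>_. {0..<d}). (A i)\<^sup>2)"

definition spectral_norm :: "'m set \<Rightarrow> ('m \<Rightarrow> 'i set) \<Rightarrow> (('m \<Rightarrow> 'i) \<Rightarrow> real) \<Rightarrow> real" where
  "spectral_norm M E T = Sup {(\<Sum>i\<in>PiE M E. T i * (\<Prod>m\<in>M. x m (i m))) | x.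
      \<forall>m\<in>M. sqrt (\<Sum>j\<in>E m. (x m j)\<^sup>2) = 1}"

definition partitions_into :: "nat \<Rightarrow> nat \<Rightarrow> nat set set set" where
  "partitions_into k l = {\<pi>. partition_on {0..<k} \<pi> \<and> card \<pi> = l}"

text \<open>Unfolding along a partition: one mode per block B, indexed by the
  multi-indices in PiE B (\<lambda>_. {0..<d}) (a set of size d^|B|).\<close>

definition unfold :: "nat \<Rightarrow> nat set set \<Rightarrow> ((nat \<Rightarrow> nat) \<Rightarrow> real) \<Rightarrow> (nat set \<Rightarrow> (nat \<Rightarrow> nat)) \<Rightarrow> real" where
  "unfold k \<pi> A = (\<lambda>I. A (\<lambda>r. if r < k then I (THE B. B \<in> \<pi> \<and> r \<in> B) r else undefined))"

definition unfold_spectral_norm :: "nat \<Rightarrow> nat \<Rightarrow> nat set set \<Rightarrow> ((nat \<Rightarrow> nat) \<Rightarrow> real) \<Rightarrow> real" where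
  "unfold_spectral_norm k d \<pi> A =
     spectral_norm \<pi> (\<lambda>B. PiE B (\<lambda>_. {0..<d})) (unfold k \<pi> A)"

end

theory Submission
  imports Defs
begin


lemma cs_sum:
  fixes a b :: "'a \<Rightarrow> real"
  shows "(\<Sum>i\<in>I. a i * b i) \<le> sqrt (\<Sum>i\<in>I. (a i)\<^sup>2) * sqrt (\<Sum>i\<in>I. (b i)\<^sup>2)"
proof -
  have "(\<Sum>i\<in>I. a i * b i) \<le> sqrt ((\<Sum>i\<in>I. a i * b i)\<^sup>2)" by simp
  also have "\<dots> \<le> sqrt ((\<Sum>i\<in>I. (a i)\<^sup>2) * (\<Sum>i\<in>I. (b i)\<^sup>2))"
    by (rule real_sqrt_le_mono[OF Cauchy_Schwarz_ineq_sum])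
  finally show ?thesis by (simp add: real_sqrt_mult)
qed

definition sval :: "'m set \<Rightarrow> ('m \<Rightarrow> 'i set) \<Rightarrow> (('m \<Rightarrow> 'i) \<Rightarrow> real) \<Rightarrow> ('m \<Rightarrow> 'i \<Rightarrow> real) \<Rightarrow> real" where
  "sval M E T x = (\<Sum>i\<in>PiE M E. T i * (\<Prod>m\<in>M. x m (i m)))"

lemma spectral_norm_alt: "spectral_norm M E T = Sup {sval M E T x | x. \<forall>m\<in>M. sqrt (\<Sum>j\<in>E m. (x m j)\<^sup>2) = 1}"
  unfolding spectral_norm_def sval_def by simp

lemma sval_le:
  assumes M: "finite M" and E: "\<And>m. m \<in> M \<Longrightarrow> finite (E m)"
    and x: "\<forall>m\<in>M. sqrt (\<Sum>j\<in>E m. (x m j)\<^sup>2) = 1"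
  shows "sval M E T x \<le> sqrt (\<Sum>i\<in>PiE M E. (T i)\<^sup>2)"
proof -
  have "(\<Sum>i\<in>PiE M E. (\<Prod>m\<in>M. x m (i m))\<^sup>2) = (\<Sum>i\<in>PiE M E. \<Prod>m\<in>M. (x m (i m))\<^sup>2)"
    by (simp add: prod_power_distrib)
  also have "\<dots> = (\<Prod>m\<in>M. \<Sum>j\<in>E m. (x m j)\<^sup>2)"
    by (rule prod_sum_PiE[symmetric]) (use M E in auto)
  also have "\<dots> = 1"
  proof (rule prod.neutral, intro ballI)
    fix m assume "m \<in> M"
    with x have "sqrt (\<Sum>j\<in>E m. (x m j)\<^sup>2) = 1" by auto
    then show "(\<Sum>j\<in>E m. (x m j)\<^sup>2) = 1" by simp
  qed
  finally have 1: "(\<Sum>i\<in>PiE M E. (\<Prod>m\<in>M. x m (i m))\<^sup>2) = 1" .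
  show ?thesis unfolding sval_def using cs_sum[of T "\<lambda>i. \<Prod>m\<in>M. x m (i m)" "PiE M E"] 1 by simp
qed

lemma spec_set_nonempty:
  assumes "\<And>m. m \<in> M \<Longrightarrow> E m \<noteq> {}" and FE: "\<And>m. m \<in> M \<Longrightarrow> finite (E m)"
  shows "\<exists>x. \<forall>m\<in>M. sqrt (\<Sum>j\<in>E m. (x m j)\<^sup>2) = 1"
proof -
  define e where "e m = (SOME j. j \<in> E m)" for m
  have e: "e m \<in> E m" if "m \<in> M" for m using assms[OF that] unfolding e_def by (simp add: some_in_eq)
  define x where "x m j = (if j = e m then 1 else 0::real)" for m j
  have "(\<Sum>j\<in>E m. (x m j)\<^sup>2) = 1" if "m \<in> M" for m
  proof -
    have "(\<Sum>j\<in>E m. (x m j)\<^sup>2) = (\<Sum>j\<in>E m. if j = e m then 1 else 0)"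
      unfolding x_def by (intro sum.cong) auto
    also have "\<dots> = 1" using e[OF that] FE[OF that] by (simp add: sum.delta')
    finally show ?thesis .
  qed
  then show ?thesis by auto
qed

lemma spectral_le_frob:
  assumes M: "finite M" and E: "\<And>m. m \<in> M \<Longrightarrow> finite (E m)" and NE: "\<And>m. m \<in> M \<Longrightarrow> E m \<noteq> {}"
  shows "spectral_norm M E T \<le> sqrt (\<Sum>i\<in>PiE M E. (T i)\<^sup>2)"
  unfolding spectral_norm_alt
  apply (rule cSup_least)
  using spec_set_nonempty[OF NE E] sval_le[where M=M and E=E and T=T] M E by auto

lemma spectral_ge:
  assumes M: "finite M" and E: "\<And>m. m \<in> M \<Longrightarrow> finite (E m)" and NE: "\<And>m. m \<in> M \<Longrightarrow> E m \<noteq> {}"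
    and x: "\<forall>m\<in>M. sqrt (\<Sum>j\<in>E m. (x m j)\<^sup>2) = 1"
  shows "sval M E T x \<le> spectral_norm M E T"
  unfolding spectral_norm_alt
  apply (rule cSup_upper)
  using x apply blast
  unfolding bdd_above_def using sval_le[where M=M and E=E and T=T] M E by blast



lemma sum_PiE_split:
  assumes "m0 \<in> M"
  shows "(\<Sum>i\<in>PiE M E. f i) = (\<Sum>(j,c)\<in>E m0 \<times> PiE (M-{m0}) E. f (c(m0:=j)))"
proof -
  have M: "M = insert m0 (M-{m0})" using assms by auto
  have eq: "PiE M E = (\<lambda>(y,g). g(m0:=y)) ` (E m0 \<times> PiE (M-{m0}) E)"
    by (subst M, rule PiE_insert_eq)
  have inj: "inj_on (\<lambda>(y,g). g(m0:=y)) (E m0 \<times> PiE (M-{m0}) E)"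
    by (rule inj_combinator) simp
  show ?thesis unfolding eq sum.reindex[OF inj] by (simp add: case_prod_unfold)
qed

lemma sval_collapse:
  assumes M: "finite M" and m0: "m0 \<in> M" and c0: "c0 \<in> PiE (M-{m0}) E"
    and FE: "\<And>m. m \<in> M \<Longrightarrow> finite (E m)"
    and x: "\<And>m j. m \<in> M - {m0} \<Longrightarrow> x m j = (if j = c0 m then 1 else 0)"
  shows "sval M E T x = (\<Sum>j\<in>E m0. T (c0(m0:=j)) * x m0 j)"
proof -
  let ?R = "PiE (M-{m0}) E"
  have pr: "(\<Prod>m\<in>M. x m ((c(m0:=j)) m)) = x m0 j * (if c = c0 then 1 else 0)"
    if c: "c \<in> ?R" for c j
  proof -
    have "(\<Prod>m\<in>M. x m ((c(m0:=j)) m)) = x m0 j * (\<Prod>m\<in>M-{m0}. x m ((c(m0:=j)) m))"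
      using M m0 by (simp add: prod.remove)
    also have "(\<Prod>m\<in>M-{m0}. x m ((c(m0:=j)) m)) = (\<Prod>m\<in>M-{m0}. if c m = c0 m then 1 else 0)"
      by (rule prod.cong) (auto simp: x)
    also have "\<dots> = (if c = c0 then 1 else 0)"
    proof (cases "c = c0")
      case True then show ?thesis by simp
    next
      case False
      then obtain m where "m \<in> M-{m0}" "c m \<noteq> c0 m"
        using c c0 by (metis PiE_E ext)
      then show ?thesis using False M by (intro trans[OF prod_zero]) auto
    qed
    finally show ?thesis .
  qed
  have "sval M E T x = (\<Sum>(j,c)\<in>E m0 \<times> ?R. T (c(m0:=j)) * (\<Prod>m\<in>M. x m ((c(m0:=j)) m)))"
    unfolding sval_def by (rule sum_PiE_split[OF m0])
  also have "\<dots> = (\<Sum>(j,c)\<in>E m0 \<times> ?R. T (c(m0:=j)) * (x m0 j * (if c = c0 then 1 else 0)))"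
    by (rule sum.cong) (auto simp del: fun_upd_apply simp: pr)
  also have "\<dots> = (\<Sum>j\<in>E m0. \<Sum>c\<in>?R. T (c(m0:=j)) * (x m0 j * (if c = c0 then 1 else 0)))"
    by (rule sum.cartesian_product[symmetric])
  also have "\<dots> = (\<Sum>j\<in>E m0. T (c0(m0:=j)) * x m0 j)"
  proof (rule sum.cong[OF refl])
    fix j
    have "(\<Sum>c\<in>?R. T (c(m0:=j)) * (x m0 j * (if c = c0 then 1 else 0))) =
          (\<Sum>c\<in>?R. if c = c0 then T (c(m0:=j)) * x m0 j else 0)"
      by (rule sum.cong) auto
    also have "\<dots> = T (c0(m0:=j)) * x m0 j"
      using c0 FE M by (subst sum.delta) (auto intro!: finite_PiE)
    finally show "(\<Sum>c\<in>?R. T (c(m0:=j)) * (x m0 j * (if c = c0 then 1 else 0))) = T (c0(m0:=j)) * x m0 j" .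
  qed
  finally show ?thesis .
qed



lemma frob_le_spectral:
  assumes M: "finite M" and m0: "m0 \<in> M" and FE: "\<And>m. m \<in> M \<Longrightarrow> finite (E m)"
    and NE: "\<And>m. m \<in> M \<Longrightarrow> E m \<noteq> {}"
  shows "sqrt (\<Sum>i\<in>PiE M E. (T i)\<^sup>2) \<le> sqrt (card (PiE (M-{m0}) E)) * spectral_norm M E T"
proof -
  let ?R = "PiE (M-{m0}) E"
  define g where "g c = (\<Sum>j\<in>E m0. (T (c(m0:=j)))\<^sup>2)" for c
  have finR: "finite ?R" using M FE by (auto intro!: finite_PiE)
  have neR: "?R \<noteq> {}" using NE by (auto simp: PiE_eq_empty_iff)
  have S: "(\<Sum>i\<in>PiE M E. (T i)\<^sup>2) = (\<Sum>c\<in>?R. g c)"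
    unfolding sum_PiE_split[OF m0] g_def
    by (subst sum.cartesian_product[symmetric]) (rule sum.swap)
  have "Max (g ` ?R) \<in> g ` ?R" using finR neR by (intro Max_in) auto
  then obtain c0 where c0R: "c0 \<in> ?R" and c0M: "g c0 = Max (g ` ?R)" by auto
  have c0: "c0 \<in> ?R" "\<And>c. c \<in> ?R \<Longrightarrow> g c \<le> g c0"
    using c0R c0M finR by auto
  have "(\<Sum>c\<in>?R. g c) \<le> of_nat (card ?R) * g c0"
    using sum_bounded_above[of ?R g "g c0"] c0 by auto
  hence "sqrt (\<Sum>i\<in>PiE M E. (T i)\<^sup>2) \<le> sqrt (card ?R) * sqrt (g c0)"
    unfolding S real_sqrt_mult[symmetric] by (rule real_sqrt_le_mono)
  moreover have "sqrt (g c0) \<le> spectral_norm M E T"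
  proof (cases "g c0 = 0")
    case True
    obtain e where e: "e \<in> E m0" using NE[OF m0] by auto
    define x where "x m j = (if m = m0 then (if j = e then 1 else 0) else (if j = c0 m then 1 else 0::real))" for m j
    have xu: "\<forall>m\<in>M. sqrt (\<Sum>j\<in>E m. (x m j)\<^sup>2) = 1"
    proof
      fix m assume m: "m \<in> M"
      have "(\<Sum>j\<in>E m. (x m j)\<^sup>2) = (\<Sum>j\<in>E m. if j = (if m = m0 then e else c0 m) then 1 else 0)"
        unfolding x_def by (rule sum.cong) auto
      also have "\<dots> = 1" using FE[OF m] e c0(1) m by (subst sum.delta) auto
      finally show "sqrt (\<Sum>j\<in>E m. (x m j)\<^sup>2) = 1" by simp
    qed
    have "sval M E T x = (\<Sum>j\<in>E m0. T (c0(m0:=j)) * x m0 j)"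
      by (rule sval_collapse[OF M m0 c0(1) FE]) (auto simp: x_def)
    also have "\<dots> = 0"
    proof (rule sum.neutral, intro ballI)
      fix j assume "j \<in> E m0"
      with True have "(T (c0(m0:=j)))\<^sup>2 = 0" unfolding g_def
        using FE[OF m0] sum_nonneg_eq_0_iff[of "E m0" "\<lambda>j. (T (c0(m0:=j)))\<^sup>2"] by auto
      then show "T (c0(m0:=j)) * x m0 j = 0" by simp
    qed
    finally show ?thesis using spectral_ge[OF M FE NE xu, of T] True by simp
  next
    case False
    have gpos: "g c0 > 0" using False unfolding g_def using sum_nonneg[of "E m0" "\<lambda>j. (T (c0(m0:=j)))\<^sup>2"] by force
    define x where "x m j = (if m = m0 then T (c0(m0:=j)) / sqrt (g c0) else (if j = c0 m then 1 else 0::real))" for m j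
    have xu: "\<forall>m\<in>M. sqrt (\<Sum>j\<in>E m. (x m j)\<^sup>2) = 1"
    proof
      fix m assume m: "m \<in> M"
      show "sqrt (\<Sum>j\<in>E m. (x m j)\<^sup>2) = 1"
      proof (cases "m = m0")
        case True
        have "(\<Sum>j\<in>E m. (x m j)\<^sup>2) = (\<Sum>j\<in>E m0. (T (c0(m0:=j)))\<^sup>2 / g c0)"
          unfolding x_def using True gpos by (intro sum.cong) (auto simp: power_divide)
        also have "\<dots> = 1" using gpos unfolding sum_divide_distrib[symmetric] g_def by simp
        finally show ?thesis by simp
      next
        case False
        have "(\<Sum>j\<in>E m. (x m j)\<^sup>2) = (\<Sum>j\<in>E m. if j = c0 m then 1 else 0)"
          unfolding x_def using False by (intro sum.cong) auto
        also have "\<dots> = 1" using FE[OF m] c0(1) m False by (subst sum.delta) auto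
        finally show ?thesis by simp
      qed
    qed
    have "sval M E T x = (\<Sum>j\<in>E m0. T (c0(m0:=j)) * x m0 j)"
      by (rule sval_collapse[OF M m0 c0(1) FE]) (auto simp: x_def)
    also have "\<dots> = (\<Sum>j\<in>E m0. (T (c0(m0:=j)))\<^sup>2) / sqrt (g c0)"
      unfolding x_def sum_divide_distrib by (intro sum.cong) (auto simp: power2_eq_square)
    also have "\<dots> = sqrt (g c0)" using gpos unfolding g_def[symmetric]
      by (simp add: real_div_sqrt)
    finally show ?thesis using spectral_ge[OF M FE NE xu, of T] by simp
  qed
  ultimately show ?thesis using mult_left_mono[of "sqrt (g c0)" "spectral_norm M E T" "sqrt (card ?R)"] by simp
qed



lemma blk_facts:
  fixes k r :: nat
  assumes P: "partition_on {0..<k} \<pi>" and r: "r < k"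
  shows "(THE B. B \<in> \<pi> \<and> r \<in> B) \<in> \<pi>" "r \<in> (THE B. B \<in> \<pi> \<and> r \<in> B)"
    "\<And>B. B \<in> \<pi> \<Longrightarrow> r \<in> B \<Longrightarrow> (THE B. B \<in> \<pi> \<and> r \<in> B) = B"
proof -
  have "r \<in> \<Union>\<pi>" using partition_onD1[OF P, symmetric] r by simp
  then have ex: "\<exists>B. B \<in> \<pi> \<and> r \<in> B" by blast
  have un: "B1 = B2" if "B1 \<in> \<pi>" "r \<in> B1" "B2 \<in> \<pi>" "r \<in> B2" for B1 B2
    using disjointD[OF partition_onD2[OF P] that(1) that(3)] that by blast
  have "\<exists>!B. B \<in> \<pi> \<and> r \<in> B" using ex un by blast
  from theI'[OF this] show "(THE B. B \<in> \<pi> \<and> r \<in> B) \<in> \<pi>" "r \<in> (THE B. B \<in> \<pi> \<and> r \<in> B)" by auto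
  fix B assume "B \<in> \<pi>" "r \<in> B"
  then show "(THE B. B \<in> \<pi> \<and> r \<in> B) = B" using un by (intro the_equality) auto
qed

lemma unfold_sum:
  assumes P: "partition_on {0..<k} \<pi>"
  shows "(\<Sum>I\<in>PiE \<pi> (\<lambda>B. PiE B (\<lambda>_. {0..<d})). (unfold k \<pi> A I)\<^sup>2)
       = (\<Sum>a\<in>PiE {0..<k} (\<lambda>_. {0..<d}). (A a)\<^sup>2)"
proof -
  define blk where "blk r = (THE B. B \<in> \<pi> \<and> r \<in> B)" for r
  note bf = blk_facts[OF P, folded blk_def]
  have sub: "B \<subseteq> {0..<k}" if "B \<in> \<pi>" for B using partition_onD1[OF P] that by auto
  define glue where "glue I = (\<lambda>r. if r < k then I (blk r) r else undefined)" for I :: "nat set \<Rightarrow> nat \<Rightarrow> nat"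
  define split where "split a = (\<lambda>B. if B \<in> \<pi> then restrict a B else undefined)" for a :: "nat \<Rightarrow> nat"
  let ?J = "PiE \<pi> (\<lambda>B. PiE B (\<lambda>_. {0..<d}))" and ?K = "PiE {0..<k} (\<lambda>_. {0..<d::nat})"
  have "bij_betw glue ?J ?K"
  proof (rule bij_betw_byWitness[where f'=split])
    show "\<forall>I\<in>?J. split (glue I) = I"
    proof
      fix I assume I: "I \<in> ?J"
      show "split (glue I) = I"
      proof
        fix B show "split (glue I) B = I B"
        proof (cases "B \<in> \<pi>")
          case True
          show ?thesis
          proof
            fix r
            have IB: "I B \<in> PiE B (\<lambda>_. {0..<d})" using I True by auto
            show "split (glue I) B r = I B r"
            proof (cases "r \<in> B")
              case True
              have rk: "r < k" using sub[OF \<open>B \<in> \<pi>\<close>] True by auto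
              have "blk r = B" using bf(3)[OF rk \<open>B \<in> \<pi>\<close> True] .
              have "split (glue I) B r = glue I r" unfolding split_def using \<open>B \<in> \<pi>\<close> True by simp
              also have "\<dots> = I (blk r) r" unfolding glue_def using rk by simp
              finally show ?thesis using \<open>blk r = B\<close> by simp
            next
              case False
              have "split (glue I) B r = undefined" unfolding split_def using \<open>B \<in> \<pi>\<close> False by simp
              moreover have "I B r = undefined" using IB False by (rule PiE_arb)
              ultimately show ?thesis by simp
            qed
          qed
        next
          case False
          have "split (glue I) B = undefined" unfolding split_def using False by simp
          moreover have "I B = undefined" using I False by (rule PiE_arb)
          ultimately show ?thesis by simp
        qed
      qed
    qed
    show "\<forall>a\<in>?K. glue (split a) = a"
    proof
      fix a assume a: "a \<in> ?K"
      show "glue (split a) = a"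
      proof
        fix r show "glue (split a) r = a r"
        proof (cases "r < k")
          case True
          have "glue (split a) r = split a (blk r) r" unfolding glue_def using True by simp
          also have "\<dots> = restrict a (blk r) r" unfolding split_def using bf(1)[OF True] by simp
          also have "\<dots> = a r" using bf(2)[OF True] by simp
          finally show ?thesis .
        next
          case False
          then have "glue (split a) r = undefined" unfolding glue_def by simp
          moreover have "a r = undefined" using a False by (intro PiE_arb[of a]) auto
          ultimately show ?thesis by simp
        qed
      qed
    qed
    show "glue ` ?J \<subseteq> ?K"
    proof
      fix a assume "a \<in> glue ` ?J"
      then obtain I where I: "I \<in> ?J" and a: "a = glue I" by auto
      have "I (blk r) r \<in> {0..<d}" if "r < k" for r
      proof -
        have "I (blk r) \<in> PiE (blk r) (\<lambda>_. {0..<d})" using I bf(1)[OF that] by blast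
        then show ?thesis using bf(2)[OF that] by blast
      qed
      then show "a \<in> ?K" unfolding a glue_def by (intro PiE_I) auto
    qed
    show "split ` ?K \<subseteq> ?J"
    proof
      fix I assume "I \<in> split ` ?K"
      then obtain a where a: "a \<in> ?K" and I: "I = split a" by auto
      have "restrict a B \<in> PiE B (\<lambda>_. {0..<d})" if "B \<in> \<pi>" for B
      proof (rule PiE_I)
        fix r assume "r \<in> B"
        then have "r \<in> {0..<k}" using sub[OF that] by blast
        then show "restrict a B r \<in> {0..<d}" using a \<open>r \<in> B\<close> by auto
      qed simp
      note rs = this
      show "I \<in> ?J" unfolding I
      proof (rule PiE_I)
        fix B assume B: "B \<in> \<pi>"
        have "split a B = restrict a B" unfolding split_def using B by simp
        then show "split a B \<in> PiE B (\<lambda>_. {0..<d})" using rs[OF B] by simp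
      next
        fix B assume "B \<notin> \<pi>" then show "split a B = undefined" unfolding split_def by simp
      qed
    qed
  qed
  moreover have "unfold k \<pi> A I = A (glue I)" for I unfolding unfold_def glue_def blk_def by simp
  ultimately show ?thesis using sum.reindex_bij_betw[of glue ?J ?K "\<lambda>a. (A a)\<^sup>2"] by simp
qed



theorem corollary4p13:
  fixes A :: "(nat \<Rightarrow> nat) \<Rightarrow> real" and d k l :: nat and \<pi> :: "nat set set"
  assumes "d \<ge> 1" and "1 \<le> l" and "l \<le> k" and "\<pi> \<in> partitions_into k l"
  shows "real d powr (- (real k - real (Max (card ` \<pi>))) / 2) * frobenius_norm k d A
           \<le> unfold_spectral_norm k d \<pi> A
         \<and> unfold_spectral_norm k d \<pi> A \<le> frobenius_norm k d A"
proof -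
  have P: "partition_on {0..<k} \<pi>" and cl: "card \<pi> = l" using assms(4) by (auto simp: partitions_into_def)
  have finP: "finite \<pi>" using finite_elements[OF _ P] by simp
  have neP: "\<pi> \<noteq> {}" using cl assms(2) by auto
  have sub: "B \<subseteq> {0..<k}" if "B \<in> \<pi>" for B using partition_onD1[OF P] that by auto
  have finB: "finite B" if "B \<in> \<pi>" for B using sub[OF that] finite_subset by blast
  define E where "E B = PiE B (\<lambda>_::nat. {0..<d})" for B
  have FE: "finite (E B)" if "B \<in> \<pi>" for B unfolding E_def using finB[OF that] by (auto intro!: finite_PiE)
  have NE: "E B \<noteq> {}" for B unfolding E_def using assms(1) by (auto simp: PiE_eq_empty_iff)
  define S where "S = (\<Sum>a\<in>PiE {0..<k} (\<lambda>_. {0..<d}). (A a)\<^sup>2)"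
  have frob: "frobenius_norm k d A = sqrt S" unfolding frobenius_norm_def S_def ..
  have spec: "unfold_spectral_norm k d \<pi> A = spectral_norm \<pi> E (unfold k \<pi> A)"
    unfolding unfold_spectral_norm_def E_def ..
  have SS: "(\<Sum>I\<in>PiE \<pi> E. (unfold k \<pi> A I)\<^sup>2) = S"
    unfolding S_def E_def by (rule unfold_sum[OF P])
  have upper: "unfold_spectral_norm k d \<pi> A \<le> frobenius_norm k d A"
    unfolding spec frob SS[symmetric] by (rule spectral_le_frob) (use finP FE NE in auto)
  define m where "m = Max (card ` \<pi>)"
  have "m \<in> card ` \<pi>" unfolding m_def using finP neP by (intro Max_in) auto
  then obtain B0 where B0: "B0 \<in> \<pi>" and m: "m = card B0" by auto
  have sumk: "(\<Sum>B\<in>\<pi>. card B) = k"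
  proof -
    have "card (\<Union>\<pi>) = (\<Sum>B\<in>\<pi>. card B)"
      using partition_onD2[OF P] finB by (intro card_Union_disjoint) (auto simp: disjoint_def pairwise_def disjnt_def)
    then show ?thesis using partition_onD1[OF P, symmetric] by simp
  qed
  have mk: "m \<le> k" using sum.remove[OF finP B0, of card] sumk m by linarith
  have cardR: "card (PiE (\<pi>-{B0}) E) = d ^ (k - m)"
  proof -
    have "card (PiE (\<pi>-{B0}) E) = (\<Prod>B\<in>\<pi>-{B0}. card (E B))" using finP by (simp add: card_PiE)
    also have "\<dots> = (\<Prod>B\<in>\<pi>-{B0}. d ^ card B)"
      unfolding E_def by (intro prod.cong) (auto simp: card_PiE finB)
    also have "\<dots> = d ^ (\<Sum>B\<in>\<pi>-{B0}. card B)" by (simp add: power_sum)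
    also have "(\<Sum>B\<in>\<pi>-{B0}. card B) = k - m"
      using sum.remove[OF finP B0, of card] sumk m by simp
    finally show ?thesis .
  qed
  have low: "sqrt S \<le> sqrt (real d ^ (k - m)) * unfold_spectral_norm k d \<pi> A"
  proof -
    have "sqrt (\<Sum>i\<in>PiE \<pi> E. (unfold k \<pi> A i)\<^sup>2) \<le> sqrt (card (PiE (\<pi>-{B0}) E)) * spectral_norm \<pi> E (unfold k \<pi> A)"
      by (rule frob_le_spectral) (use finP B0 FE NE in auto)
    then show ?thesis unfolding SS spec cardR by simp
  qed
  have dpos: "real d > 0" using assms(1) by simp
  have Npos: "sqrt (real d ^ (k - m)) > 0" using dpos by (intro real_sqrt_gt_zero zero_less_power)
  have pw: "real d powr (- (real k - real m) / 2) = inverse (sqrt (real d ^ (k - m)))"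
  proof -
    have e: "- (real k - real m) / 2 = - (real (k - m) / 2)" unfolding of_nat_diff[OF mk] by (rule minus_divide_left[symmetric])
    have "real d powr (- (real k - real m) / 2) = inverse (real d powr (real (k - m) / 2))"
      unfolding e by (rule powr_minus)
    also have "real d powr (real (k - m) / 2) = sqrt (real d powr real (k - m))"
      by (rule powr_half_sqrt_powr) (use dpos in simp)
    also have "real d powr real (k - m) = real d ^ (k - m)" using dpos by (rule powr_realpow)
    finally show ?thesis .
  qed
  have "real d powr (- (real k - real m) / 2) * sqrt S \<le> unfold_spectral_norm k d \<pi> A"
  proof -
    let ?N = "sqrt (real d ^ (k - m))"
    have "inverse ?N * sqrt S \<le> inverse ?N * (?N * unfold_spectral_norm k d \<pi> A)"
      by (rule mult_left_mono[OF low]) (use Npos in simp)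
    also have "\<dots> = (inverse ?N * ?N) * unfold_spectral_norm k d \<pi> A" by (rule mult.assoc[symmetric])
    also have "inverse ?N * ?N = 1" using Npos by (intro left_inverse) (rule less_imp_neq[symmetric])
    also have "1 * unfold_spectral_norm k d \<pi> A = unfold_spectral_norm k d \<pi> A" by (rule mult_1)
    finally show ?thesis unfolding pw .
  qed
  then show ?thesis using upper unfolding frob m_def by blast
qed


end
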